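(* Let $\phi$ be a 3SAT instance on variables $s_1,\dots,s_n$ with clauses $C_1,\dots,C_m$, each clause being a disjunction of exactly three literals. Let $\mathcal{G}=\mathcal{G}(\phi)$ be the edge-weighted graph defined in the context. Then $\phi$ is satisfiable if and only if $\mathcal{G}$ has a realization in $\mathbb{R}$, i.e. a map $x:V(\mathcal{G})\to\mathbb{R}$ with $|x_u-x_v|=d_{uv}$ for every edge $\{u,v\}$.
   Context: The graph $\mathcal{G}(\phi)$ has vertex set consisting of: two vertices $\mathsf{A},\mathsf{B}$; for each variable $s_j$ ($j\le n$) two literal vertices, denoted $s_j$ and $\bar s_j$; and for each clause $i\le m$ eight new vertices $c_{i1},\dots,c_{i8}$. For clause $i$ and $h\in\{1,2,3\}$, let $\mathsf{L}_{ih}$ denote the literal vertex ($s_j$ or $\bar s_j$) of the $h$-th literal of clause $i$. Edges with weights: $\{\mathsf{A},\mathsf{B}\}$ weight 2; for each $j\le n$: $\{s_j,\bar s_j\}$ weight 2, $\{\mathsf{A},s_j\}$ weight 1, $\{\mathsf{A},\bar s_j\}$ weight 1. For each clause $i\le m$: $\{\mathsf{A},c_{i2}\}$ weight 4, $\{\mathsf{A},c_{i7}\}$ weight 2, $\{\mathsf{L}_{i1},c_{i2}\}$ weight 3, $\{\mathsf{L}_{i2},c_{i7}\}$ weight 1, $\{c_{i2},c_{i4}\}$ weight 2, $\{c_{i7},c_{i3}\}$ weight 4, $\{\mathsf{B},c_{i1}\}$ weight 4, $\{c_{i1},c_{i5}\}$ weight 2, $\{c_{i5},c_{i6}\}$ weight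 1, $\{c_{i3},c_{i6}\}$ weight 1, $\{c_{i4},c_{i6}\}$ weight 1, $\{\mathsf{L}_{i3},c_{i8}\}$ weight 4, $\{c_{i6},c_{i8}\}$ weight 2 (edges $\{\mathsf{A},\mathsf{L}_{ih}\}$ of weight 1 are already present). A truth assignment corresponds to positions via: $x_\mathsf{A}=0$, $x_\mathsf{B}=2$, and literal vertex at $1$ means TRUE, at $-1$ means FALSE. *)

theory Defs
  imports Main "HOL.Real"
begin

text \<open>A literal is a pair (j, b): variable index j (variables are s_0,...,s_{n-1});
  b = True means the positive literal s_j, b = False the negated literal (bar s_j).\<close>
type_synonym lit = "nat \<times> bool"

type_synonym clause = "lit \<times> lit \<times> lit"

definition wf_3sat :: "nat \<Rightarrow> clause list \<Rightarrow> bool" where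
  "wf_3sat n phi \<longleftrightarrow>
     (\<forall>(l1, l2, l3) \<in> set phi. fst l1 < n \<and> fst l2 < n \<and> fst l3 < n)"

definition lit_true :: "(nat \<Rightarrow> bool) \<Rightarrow> lit \<Rightarrow> bool" where
  "lit_true \<sigma> l \<longleftrightarrow> \<sigma> (fst l) = snd l"

definition clause_true :: "(nat \<Rightarrow> bool) \<Rightarrow> clause \<Rightarrow> bool" where
  "clause_true \<sigma> c \<longleftrightarrow>
     (case c of (l1, l2, l3) \<Rightarrow> lit_true \<sigma> l1 \<or> lit_true \<sigma> l2 \<or> lit_true \<sigma> l3)"

definition satisfiable :: "clause list \<Rightarrow> bool" where
  "satisfiable phi \<longleftrightarrow> (\<exists>\<sigma>. \<forall>c \<in> set phi. clause_true \<sigma> c)"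

text \<open>Vertices of G(phi): A, B, literal vertices Lit j b (s_j if b, bar s_j otherwise),
  and clause vertices Cv i k = c_{ik} (k = 1..8).\<close>
datatype vertex = VA | VB | Lit nat bool | Cv nat nat

definition LV :: "lit \<Rightarrow> vertex" where
  "LV l = Lit (fst l) (snd l)"

definition clause_edges :: "nat \<Rightarrow> clause \<Rightarrow> (vertex \<times> vertex \<times> real) set" where
  "clause_edges i c = (case c of (l1, l2, l3) \<Rightarrow>
     {(VA, Cv i 2, 4), (VA, Cv i 7, 2), (LV l1, Cv i 2, 3), (LV l2, Cv i 7, 1),
      (Cv i 2, Cv i 4, 2), (Cv i 7, Cv i 3, 4), (VB, Cv i 1, 4), (Cv i 1, Cv i 5, 2),
      (Cv i 5, Cv i 6, 1), (Cv i 3, Cv i 6, 1), (Cv i 4, Cv i 6, 1), (LV l3, Cv i 8, 4),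
      (Cv i 6, Cv i 8, 2)})"

definition G_edges :: "nat \<Rightarrow> clause list \<Rightarrow> (vertex \<times> vertex \<times> real) set" where
  "G_edges n phi =
     {(VA, VB, 2)}
     \<union> (\<Union>j<n. {(Lit j True, Lit j False, 2), (VA, Lit j True, 1), (VA, Lit j False, 1)})
     \<union> (\<Union>i<length phi. clause_edges i (phi ! i))"

definition G_vertices :: "nat \<Rightarrow> clause list \<Rightarrow> vertex set" where
  "G_vertices n phi = {VA, VB} \<union> {Lit j b | j b. j < n}
     \<union> {Cv i k | i k. i < length phi \<and> 1 \<le> k \<and> k \<le> 8}"

definition realizable_R :: "nat \<Rightarrow> clause list \<Rightarrow> bool" where
  "realizable_R n phi \<longleftrightarrow>
     (\<exists>x :: vertex \<Rightarrow> real. \<forall>(u, v, d) \<in> G_edges n phi. \<bar>x u - x v\<bar> = d)"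

end

theory Submission
  imports Defs
begin

lemma gadget_unsat:
  fixes c1 c2 c3 c4 c5 c6 c7 c8 :: real
  assumes "\<bar>0 - c2\<bar> = 4" "\<bar>0 - c7\<bar> = 2" "\<bar>-1 - c2\<bar> = 3" "\<bar>-1 - c7\<bar> = 1"
    "\<bar>c2 - c4\<bar> = 2" "\<bar>c7 - c3\<bar> = 4" "\<bar>2 - c1\<bar> = 4" "\<bar>c1 - c5\<bar> = 2"
    "\<bar>c5 - c6\<bar> = 1" "\<bar>c3 - c6\<bar> = 1" "\<bar>c4 - c6\<bar> = 1" "\<bar>-1 - c8\<bar> = 4"
    "\<bar>c6 - c8\<bar> = 2"
  shows False
proof -
  have "c2 = -4" using assms(1,3) by (auto simp: abs_if split: if_splits)
  have "c7 = -2" using assms(2,4) by (auto simp: abs_if split: if_splits)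
  have c4: "c4 = -2 \<or> c4 = -6" using assms(5) \<open>c2 = -4\<close> by (auto simp: abs_if split: if_splits)
  have c3: "c3 = 2 \<or> c3 = -6" using assms(6) \<open>c7 = -2\<close> by (auto simp: abs_if split: if_splits)
  have c6a: "c6 = -1 \<or> c6 = -3 \<or> c6 = -5 \<or> c6 = -7" using c4 assms(11) by (auto simp: abs_if split: if_splits)
  have c6b: "c6 = 3 \<or> c6 = 1 \<or> c6 = -5 \<or> c6 = -7" using c3 assms(10) by (auto simp: abs_if split: if_splits)
  have c6c: "c6 = -5 \<or> c6 = -7" using c6a c6b by auto
  have c8: "c8 = 3 \<or> c8 = -5" using assms(12) by (auto simp: abs_if split: if_splits)
  have c6: "c6 = -7" using c6c c8 assms(13) by (auto simp: abs_if split: if_splits)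
  have c1: "c1 = 6 \<or> c1 = -2" using assms(7) by (auto simp: abs_if split: if_splits)
  have c5: "c5 = 8 \<or> c5 = 4 \<or> c5 = 0 \<or> c5 = -4" using c1 assms(8) by (auto simp: abs_if split: if_splits)
  show False using c5 c6 assms(9) by (auto simp: abs_if split: if_splits)
qed

lemma gadget_unsat2:
  fixes a b p q r c1 c2 c3 c4 c5 c6 c7 c8 :: real
  assumes "a = 0" "b = 2" "p = -1" "q = -1" "r = -1"
    "\<bar>a - c2\<bar> = 4" "\<bar>a - c7\<bar> = 2" "\<bar>p - c2\<bar> = 3" "\<bar>q - c7\<bar> = 1"
    "\<bar>c2 - c4\<bar> = 2" "\<bar>c7 - c3\<bar> = 4" "\<bar>b - c1\<bar> = 4" "\<bar>c1 - c5\<bar> = 2"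
    "\<bar>c5 - c6\<bar> = 1" "\<bar>c3 - c6\<bar> = 1" "\<bar>c4 - c6\<bar> = 1" "\<bar>r - c8\<bar> = 4"
    "\<bar>c6 - c8\<bar> = 2"
  shows False
  using gadget_unsat[of c2 c7 c4 c3 c1 c5 c6 c8] assms by simp

fun gad :: "bool \<Rightarrow> bool \<Rightarrow> bool \<Rightarrow> nat \<Rightarrow> real" where
  "gad True True True k = [6,4,6,6,8,7,2,5] ! (k - 1)"
| "gad True True False k = [6,4,6,6,4,5,2,3] ! (k - 1)"
| "gad True False True k = [6,4,2,2,4,3,-2,5] ! (k - 1)"
| "gad True False False k = [-2,4,2,2,0,1,-2,3] ! (k - 1)"
| "gad False True True k = [-2,-4,-2,-2,0,-1,2,-3] ! (k - 1)"
| "gad False True False k = [-2,-4,-2,-2,-4,-3,2,-5] ! (k - 1)"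
| "gad False False True k = [-2,-4,-6,-6,-4,-5,-2,-3] ! (k - 1)"
| "gad False False False k = 0"

lemma gad_ok:
  assumes "a \<or> b \<or> c"
  defines "va \<equiv> (if a then 1 else -1::real)" and "vb \<equiv> (if b then 1 else -1::real)"
    and "vc \<equiv> (if c then 1 else -1::real)"
  shows "\<bar>0 - gad a b c 2\<bar> = 4 \<and> \<bar>0 - gad a b c 7\<bar> = 2 \<and> \<bar>va - gad a b c 2\<bar> = 3
    \<and> \<bar>vb - gad a b c 7\<bar> = 1 \<and> \<bar>gad a b c 2 - gad a b c 4\<bar> = 2
    \<and> \<bar>gad a b c 7 - gad a b c 3\<bar> = 4 \<and> \<bar>2 - gad a b c 1\<bar> = 4
    \<and> \<bar>gad a b c 1 - gad a b c 5\<bar> = 2 \<and> \<bar>gad a b c 5 - gad a b c 6\<bar> = 1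
    \<and> \<bar>gad a b c 3 - gad a b c 6\<bar> = 1 \<and> \<bar>gad a b c 4 - gad a b c 6\<bar> = 1
    \<and> \<bar>vc - gad a b c 8\<bar> = 4 \<and> \<bar>gad a b c 6 - gad a b c 8\<bar> = 2"
  using assms(1) unfolding va_def vb_def vc_def
  by (cases a; cases b; cases c) simp_all

definition xof :: "(nat \<Rightarrow> bool) \<Rightarrow> clause list \<Rightarrow> vertex \<Rightarrow> real" where
  "xof \<sigma> phi v = (case v of VA \<Rightarrow> 0 | VB \<Rightarrow> 2
     | Lit j b \<Rightarrow> (if \<sigma> j = b then 1 else -1)
     | Cv i k \<Rightarrow> (case phi ! i of (l1, l2, l3) \<Rightarrow>
          gad (lit_true \<sigma> l1) (lit_true \<sigma> l2) (lit_true \<sigma> l3) k))"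

lemma forward:
  assumes "\<forall>c \<in> set phi. clause_true \<sigma> c"
  shows "realizable_R n phi"
  unfolding realizable_R_def
proof (intro exI[of _ "xof \<sigma> phi"] ballI)
  fix e assume e: "e \<in> G_edges n phi"
  show "case e of (u, v, d) \<Rightarrow> \<bar>xof \<sigma> phi u - xof \<sigma> phi v\<bar> = d"
  proof (cases "e \<in> (\<Union>i<length phi. clause_edges i (phi ! i))")
    case True
    then obtain i where i: "i < length phi" "e \<in> clause_edges i (phi ! i)" by blast
    obtain l1 l2 l3 where c: "phi ! i = (l1, l2, l3)" by (cases "phi ! i") auto
    have "clause_true \<sigma> (l1, l2, l3)" using assms i(1) c by (metis nth_mem)
    then have ct: "lit_true \<sigma> l1 \<or> lit_true \<sigma> l2 \<or> lit_true \<sigma> l3" by (simp add: clause_true_def)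
    have lv: "\<And>l. xof \<sigma> phi (LV l) = (if lit_true \<sigma> l then 1 else -1)"
      by (simp add: xof_def LV_def lit_true_def)
    have xa: "xof \<sigma> phi VA = 0" and xb: "xof \<sigma> phi VB = 2" by (simp_all add: xof_def)
    have cv: "\<And>k. xof \<sigma> phi (Cv i k) = gad (lit_true \<sigma> l1) (lit_true \<sigma> l2) (lit_true \<sigma> l3) k"
      by (simp add: xof_def c)
    have g0: "\<forall>(u, v, d) \<in> clause_edges i (l1, l2, l3). \<bar>xof \<sigma> phi u - xof \<sigma> phi v\<bar> = d"
      unfolding clause_edges_def prod.case ball_simps lv cv xa xb by (simp only: gad_ok[OF ct] simp_thms)
    have "e \<in> clause_edges i (l1, l2, l3)" using i(2) c by simp
    from bspec[OF g0 this] show ?thesis .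
  next
    case False
    then have "e \<in> {(VA, VB, 2)} \<union> (\<Union>j<n. {(Lit j True, Lit j False, 2), (VA, Lit j True, 1), (VA, Lit j False, 1)})"
      using e unfolding G_edges_def by blast
    then show ?thesis by (auto simp: xof_def)
  qed
qed

lemma yE_gen:
  assumes "\<forall>(u, v, d) \<in> E. \<bar>x u - x v\<bar> = (d::real)" "(u, v, d) \<in> E"
  shows "\<bar>x u - x v\<bar> = d"
  using bspec[OF assms(1) assms(2)] by simp

lemma backward:
  assumes wf: "wf_3sat n phi" and r: "realizable_R n phi"
  shows "satisfiable phi"
proof -
  obtain x :: "vertex \<Rightarrow> real" where x: "\<forall>(u, v, d) \<in> G_edges n phi. \<bar>x u - x v\<bar> = d"
    using r unfolding realizable_R_def by blast
  have "(VA, VB, 2) \<in> G_edges n phi" unfolding G_edges_def by blast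
  then have AB: "\<bar>x VA - x VB\<bar> = 2" using yE_gen[OF x] by blast
  define s :: real where "s = (if x VB - x VA = 2 then 1 else -1)"
  define y where "y v = s * (x v - x VA)" for v
  have yE: "\<bar>y u - y v\<bar> = d" if "(u, v, d) \<in> G_edges n phi" for u v d
  proof -
    have "\<bar>x u - x v\<bar> = d" using yE_gen[OF x that] .
    moreover have "\<bar>y u - y v\<bar> = \<bar>x u - x v\<bar>"
      unfolding y_def s_def by (auto simp: abs_if algebra_simps)
    ultimately show ?thesis by simp
  qed
  have yA: "y VA = 0" by (simp add: y_def)
  have yB: "y VB = 2" using AB by (auto simp: y_def s_def abs_if split: if_splits)
  have litE: "y (Lit j True) = 1 \<and> y (Lit j False) = -1 \<or> y (Lit j True) = -1 \<and> y (Lit j False) = 1"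
    if "j < n" for j
  proof -
    have "(Lit j True, Lit j False, 2) \<in> G_edges n phi" "(VA, Lit j True, 1) \<in> G_edges n phi"
      "(VA, Lit j False, 1) \<in> G_edges n phi"
      using that unfolding G_edges_def by blast+
    then have "\<bar>y (Lit j True) - y (Lit j False)\<bar> = 2" "\<bar>y VA - y (Lit j True)\<bar> = 1"
      "\<bar>y VA - y (Lit j False)\<bar> = 1"
      using yE by blast+
    then show ?thesis using yA by (auto simp: abs_if split: if_splits)
  qed
  define \<sigma> where "\<sigma> j = (y (Lit j True) = 1)" for j
  have lt: "lit_true \<sigma> l \<longleftrightarrow> y (LV l) = 1" if "fst l < n" for l
    using litE[OF that] by (cases l; cases "snd l") (auto simp: lit_true_def \<sigma>_def LV_def)
  have lpm: "y (LV l) = 1 \<or> y (LV l) = -1" if "fst l < n" for l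
    using litE[OF that] by (cases l; cases "snd l") (auto simp: LV_def)
  have "\<forall>c \<in> set phi. clause_true \<sigma> c"
  proof
    fix c assume cin: "c \<in> set phi"
    then obtain i where i: "i < length phi" "phi ! i = c" by (auto simp: in_set_conv_nth)
    obtain l1 l2 l3 where c: "c = (l1, l2, l3)" by (cases c) auto
    have f: "fst l1 < n" "fst l2 < n" "fst l3 < n" using wf cin c
      by (auto simp: wf_3sat_def)
    have sub: "clause_edges i c \<subseteq> G_edges n phi" using i unfolding G_edges_def by blast
    have ce: "\<And>u v d. (u, v, d) \<in> clause_edges i c \<Longrightarrow> \<bar>y u - y v\<bar> = d"
      using sub yE by blast
    have ce2: "\<And>u v d. (u, v, d) \<in> {(VA, Cv i 2, 4), (VA, Cv i 7, 2), (LV l1, Cv i 2, 3), (LV l2, Cv i 7, 1),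
      (Cv i 2, Cv i 4, 2), (Cv i 7, Cv i 3, 4), (VB, Cv i 1, 4), (Cv i 1, Cv i 5, 2),
      (Cv i 5, Cv i 6, 1), (Cv i 3, Cv i 6, 1), (Cv i 4, Cv i 6, 1), (LV l3, Cv i 8, 4),
      (Cv i 6, Cv i 8, 2)} \<Longrightarrow> \<bar>y u - y v\<bar> = d"
      using ce unfolding c clause_edges_def prod.case .
    show "clause_true \<sigma> c"
    proof (rule ccontr)
      assume "\<not> clause_true \<sigma> c"
      then have "\<not> lit_true \<sigma> l1" "\<not> lit_true \<sigma> l2" "\<not> lit_true \<sigma> l3"
        using c by (auto simp: clause_true_def)
      then have m: "y (LV l1) = -1" "y (LV l2) = -1" "y (LV l3) = -1"
        using lt f lpm by blast+
      show False
        apply (rule gadget_unsat2[OF yA yB m, of "y (Cv i 2)" "y (Cv i 7)" "y (Cv i 4)" "y (Cv i 3)" "y (Cv i 1)"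
            "y (Cv i 5)" "y (Cv i 6)" "y (Cv i 8)"])
        by (rule ce2; simp only: insert_iff simp_thms)+
    qed
  qed
  then show ?thesis by (auto simp: satisfiable_def)
qed

theorem theorem1:
  fixes n :: nat and phi :: "clause list"
  assumes "wf_3sat n phi"
  shows "satisfiable phi \<longleftrightarrow> realizable_R n phi"
proof
  assume "satisfiable phi"
  then obtain \<sigma> where "\<forall>c \<in> set phi. clause_true \<sigma> c" unfolding satisfiable_def by blast
  then show "realizable_R n phi" by (rule forward)
next
  assume "realizable_R n phi"
  then show "satisfiable phi" by (rule backward[OF assms])
qed

end
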